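(* In the setting described in the context, for any vector $\boldsymbol{c}=(c_1,c_2)$ of positive integers and all $\theta_1,\theta_2\in\mathbb{R}$, $$\mathrm{cp}(A_{*,*}(\theta_1,\theta_2))=\mathrm{cp}\big({}^{\boldsymbol{c}}\!A_{*,*}(c_1\theta_1,c_2\theta_2)\big).$$
   Context: Let $S_0=\{1,\dots,s_0\}$ be finite and $A_{k,l}$, $k,l\in\{-1,0,1\}$, nonnegative $s_0\times s_0$ matrices with $\sum A_{k,l}$ stochastic; they are the transition blocks of a Markov chain $\{\boldsymbol{Y}_n\}$ on $\mathbb{Z}^2\times S_0$ with $\mathbb{P}(\boldsymbol{Y}_{n+1}=(x_1+k,x_2+l,j')\mid\boldsymbol{Y}_n=(x_1,x_2,j))=[A_{k,l}]_{j,j'}$ (no other transitions). Let $\mathbb{S}_+=\mathbb{Z}_+^2\times S_0$, $P_+$ the restriction of the transition matrix to $\mathbb{S}_+$, $\boldsymbol\pi_{*,*}$ the stationary distribution of $\sum A_{k,l}$, $a_1=\boldsymbol{\pi}_{*,*}\sum_l(A_{1,l}-A_{-1,l})\mathbf{1}$, $a_2=\boldsymbol{\pi}_{*,*}\sum_k(A_{k,1}-A_{k,-1})\mathbf{1}$. Standing assumptions: $\{\boldsymbol Y_n\}$ irreducible and aperiodic; $a_1<0$ or $a_2<0$; $P_+$ irreducible. $A_{*,*}(\theta_1,\theta_2)=\sum_{k,l}e^{k\theta_1+l\theta_2}A_{k,l}$. For a nonnegative square matrix $A$, $\mathrm{cp}(A)=\sup\{r\ge0:\sum_nr^nA^n<\infty\text{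 elementwise}\}$. Given $\boldsymbol c$, let $\mathbb{Z}_{0,m}=\{0,1,\dots,m\}$ and for $i,j\in\{-1,0,1\}$ define matrices ${}^{\boldsymbol{c}}\!A_{i,j}$ indexed by $(\mathbb{Z}_{0,c_1-1}\times\mathbb{Z}_{0,c_2-1}\times S_0)^2$ by $[{}^{\boldsymbol{c}}\!A_{i,j}]_{(m_1,m_2,s),(m_1',m_2',s')}=[A_{u_1,u_2}]_{s,s'}$ with $u_1=c_1i+m_1'-m_1$, $u_2=c_2j+m_2'-m_2$, if $u_1,u_2\in\{-1,0,1\}$, and $0$ otherwise (these are the transition blocks of the process $({}^{\boldsymbol c}X_{1,n},{}^{\boldsymbol c}X_{2,n},({}^{\boldsymbol c}M_{1,n},{}^{\boldsymbol c}M_{2,n},J_n))$ where $X_{i,n}=c_i\,{}^{\boldsymbol c}X_{i,n}+{}^{\boldsymbol c}M_{i,n}$, $0\le{}^{\boldsymbol c}M_{i,n}\le c_i-1$). Set ${}^{\boldsymbol{c}}\!A_{*,*}(\theta_1,\theta_2)=\sum_{i,j\in\{-1,0,1\}}e^{i\theta_1+j\theta_2}\,{}^{\boldsymbol{c}}\!A_{i,j}$. *)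

theory Defs
  imports "HOL-Analysis.Analysis"
begin

text \<open>A (possibly infinite) nonnegative matrix is a function I \<Rightarrow> I \<Rightarrow> real;
  we only consider finite index sets here.\<close>

fun matpow :: "'i set \<Rightarrow> ('i \<Rightarrow> 'i \<Rightarrow> real) \<Rightarrow> nat \<Rightarrow> 'i \<Rightarrow> 'i \<Rightarrow> real" where
  "matpow I M 0 = (\<lambda>i j. if i = j then 1 else 0)"
| "matpow I M (Suc n) = (\<lambda>i j. \<Sum>k\<in>I. matpow I M n i k * M k j)"

definition cp :: "'i set \<Rightarrow> ('i \<Rightarrow> 'i \<Rightarrow> real) \<Rightarrow> ereal" where
  "cp I M = Sup {ereal r | r. r \<ge> 0 \<and>
      (\<forall>i\<in>I. \<forall>j\<in>I. summable (\<lambda>n. r ^ n * matpow I M n i j))}"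

text \<open>Transition blocks: A k l s s' = [A_{k,l}]_{s,s'}, only k,l \<in> {-1,0,1} are used.
  The phase space S0 is a finite (nonempty) type 's.\<close>

definition dirs :: "int set" where "dirs = {-1, 0, 1}"

definition blocks_ok :: "(int \<Rightarrow> int \<Rightarrow> 's::finite \<Rightarrow> 's \<Rightarrow> real) \<Rightarrow> bool" where
  "blocks_ok A \<longleftrightarrow> (\<forall>k\<in>dirs. \<forall>l\<in>dirs. \<forall>s s'. A k l s s' \<ge> 0)
     \<and> (\<forall>s. (\<Sum>k\<in>dirs. \<Sum>l\<in>dirs. \<Sum>s'\<in>UNIV. A k l s s') = 1)"

definition transP :: "(int \<Rightarrow> int \<Rightarrow> 's::finite \<Rightarrow> 's \<Rightarrow> real)
    \<Rightarrow> (int \<times> int \<times> 's) \<Rightarrow> (int \<times> int \<times> 's) \<Rightarrow> real" where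
  "transP A = (\<lambda>(x1, x2, j) (y1, y2, j').
     if y1 - x1 \<in> dirs \<and> y2 - x2 \<in> dirs then A (y1 - x1) (y2 - x2) j j' else 0)"

definition edges :: "'a set \<Rightarrow> ('a \<Rightarrow> 'a \<Rightarrow> real) \<Rightarrow> ('a \<times> 'a) set" where
  "edges S P = {(x, y). x \<in> S \<and> y \<in> S \<and> P x y > 0}"

definition irreducible_on :: "'a set \<Rightarrow> ('a \<Rightarrow> 'a \<Rightarrow> real) \<Rightarrow> bool" where
  "irreducible_on S P \<longleftrightarrow> (\<forall>x\<in>S. \<forall>y\<in>S. (x, y) \<in> (edges S P)\<^sup>*)"

definition aperiodic_on :: "'a set \<Rightarrow> ('a \<Rightarrow> 'a \<Rightarrow> real) \<Rightarrow> bool" where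
  "aperiodic_on S P \<longleftrightarrow> (\<forall>x\<in>S. Gcd {n. n > 0 \<and> (x, x) \<in> (edges S P) ^^ n} = 1)"

definition Splus :: "(int \<times> int \<times> 's) set" where
  "Splus = {(x1, x2, j). x1 \<ge> 0 \<and> x2 \<ge> 0}"

definition stationary :: "(int \<Rightarrow> int \<Rightarrow> 's::finite \<Rightarrow> 's \<Rightarrow> real) \<Rightarrow> ('s \<Rightarrow> real) \<Rightarrow> bool" where
  "stationary A \<pi> \<longleftrightarrow> (\<forall>s. \<pi> s \<ge> 0) \<and> (\<Sum>s\<in>UNIV. \<pi> s) = 1
     \<and> (\<forall>s'. (\<Sum>s\<in>UNIV. \<pi> s * (\<Sum>k\<in>dirs. \<Sum>l\<in>dirs. A k l s s')) = \<pi> s')"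

definition drift1 :: "(int \<Rightarrow> int \<Rightarrow> 's::finite \<Rightarrow> 's \<Rightarrow> real) \<Rightarrow> ('s \<Rightarrow> real) \<Rightarrow> real" where
  "drift1 A \<pi> = (\<Sum>s\<in>UNIV. \<pi> s * (\<Sum>s'\<in>UNIV. \<Sum>l\<in>dirs. A 1 l s s' - A (-1) l s s'))"

definition drift2 :: "(int \<Rightarrow> int \<Rightarrow> 's::finite \<Rightarrow> 's \<Rightarrow> real) \<Rightarrow> ('s \<Rightarrow> real) \<Rightarrow> real" where
  "drift2 A \<pi> = (\<Sum>s\<in>UNIV. \<pi> s * (\<Sum>s'\<in>UNIV. \<Sum>k\<in>dirs. A k 1 s s' - A k (-1) s s'))"

definition Astar :: "(int \<Rightarrow> int \<Rightarrow> 's::finite \<Rightarrow> 's \<Rightarrow> real) \<Rightarrow> real \<Rightarrow> real \<Rightarrow> 's \<Rightarrow> 's \<Rightarrow> real" where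
  "Astar A \<theta>1 \<theta>2 = (\<lambda>s s'. \<Sum>k\<in>dirs. \<Sum>l\<in>dirs.
      exp (real_of_int k * \<theta>1 + real_of_int l * \<theta>2) * A k l s s')"

definition cIdx :: "nat \<Rightarrow> nat \<Rightarrow> (nat \<times> nat \<times> 's) set" where
  "cIdx c1 c2 = {0..<c1} \<times> {0..<c2} \<times> UNIV"

definition cA :: "(int \<Rightarrow> int \<Rightarrow> 's::finite \<Rightarrow> 's \<Rightarrow> real) \<Rightarrow> nat \<Rightarrow> nat \<Rightarrow> int \<Rightarrow> int
    \<Rightarrow> (nat \<times> nat \<times> 's) \<Rightarrow> (nat \<times> nat \<times> 's) \<Rightarrow> real" where
  "cA A c1 c2 i j = (\<lambda>(m1, m2, s) (m1', m2', s').
     (let u1 = int c1 * i + int m1' - int m1; u2 = int c2 * j + int m2' - int m2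
      in if u1 \<in> dirs \<and> u2 \<in> dirs then A u1 u2 s s' else 0))"

definition cAstar :: "(int \<Rightarrow> int \<Rightarrow> 's::finite \<Rightarrow> 's \<Rightarrow> real) \<Rightarrow> nat \<Rightarrow> nat \<Rightarrow> real \<Rightarrow> real
    \<Rightarrow> (nat \<times> nat \<times> 's) \<Rightarrow> (nat \<times> nat \<times> 's) \<Rightarrow> real" where
  "cAstar A c1 c2 \<theta>1 \<theta>2 = (\<lambda>x y. \<Sum>i\<in>dirs. \<Sum>j\<in>dirs.
      exp (real_of_int i * \<theta>1 + real_of_int j * \<theta>2) * cA A c1 c2 i j x y)"

end

theory Submission
  imports Defs
begin

lemma div_dirs:
  fixes t c :: int assumes "c > 0" "-c \<le> t" "t \<le> c"
  shows "t div c \<in> dirs"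
proof -
  have a: "t div c \<ge> -1"
  proof -
    have "(-c) div c \<le> t div c" using assms by (intro zdiv_mono1) auto
    moreover have "(-c) div c = -1" using assms by (simp add: zdiv_zminus1_eq_if)
    ultimately show ?thesis by simp
  qed
  have b: "t div c \<le> 1"
  proof -
    have "t div c \<le> c div c" using assms by (intro zdiv_mono1) auto
    thus ?thesis using assms by simp
  qed
  from a b show ?thesis unfolding dirs_def by auto
qed

lemma dirs_reindex:
  fixes c m :: nat and f :: "int \<Rightarrow> 'b::comm_monoid_add"
  assumes "m < c"
  shows "(\<Sum>m'\<in>{0..<c}. \<Sum>i\<in>dirs. if int c * i + int m' - int m \<in> dirs
            then f (int c * i + int m' - int m) else 0) = (\<Sum>k\<in>dirs. f k)"
proof -
  let ?u = "\<lambda>p. int c * snd p + int (fst p) - int m"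
  have fd: "finite dirs" unfolding dirs_def by simp
  have "(\<Sum>m'\<in>{0..<c}. \<Sum>i\<in>dirs. if int c * i + int m' - int m \<in> dirs
            then f (int c * i + int m' - int m) else 0)
      = (\<Sum>p\<in>{0..<c}\<times>dirs. if ?u p \<in> dirs then f (?u p) else 0)"
    by (simp add: sum.cartesian_product split_def)
  also have "\<dots> = (\<Sum>p\<in>{p\<in>{0..<c}\<times>dirs. ?u p \<in> dirs}. f (?u p))"
    using fd by (simp add: sum.inter_filter)
  also have "\<dots> = (\<Sum>k\<in>dirs. f k)"
  proof -
    let ?S = "{p\<in>{0..<c}\<times>dirs. ?u p \<in> dirs}"
    let ?j = "\<lambda>k. (nat ((k + int m) mod int c), (k + int m) div int c)"
    have c0: "int c > 0" using assms by simp
    have h1: "?u (?j a) = a" for a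
    proof -
      have e: "int (nat ((a+int m) mod int c)) = (a+int m) mod int c" using c0 by simp
      have "int c * ((a+int m) div int c) + (a+int m) mod int c = a + int m"
        by (rule mult_div_mod_eq)
      then show ?thesis using e by simp
    qed
    have h2: "?j a \<in> ?S" if a: "a \<in> dirs" for a
    proof -
      have "(a + int m) div int c \<in> dirs"
        using a assms by (intro div_dirs) (auto simp: dirs_def)
      moreover have "nat ((a + int m) mod int c) < c" using c0
        by (simp add: nat_less_iff)
      ultimately show ?thesis using a h1[of a] by auto
    qed
    have h3: "?j (?u b) = b" if b: "b \<in> ?S" for b
    proof -
      obtain m' i where bi: "b = (m', i)" "m' < c" using b by auto
      have "(?u b + int m) = int m' + int c * i" using bi by simp
      moreover have "(int m' + int c * i) mod int c = int m'" using bi by simp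
      moreover have "(int m' + int c * i) div int c = i" using bi by simp
      ultimately show ?thesis using bi by simp
    qed
    have h4: "?u b \<in> dirs" if "b \<in> ?S" for b using that by auto
    show ?thesis
      apply (rule sum.reindex_bij_witness[where j = ?u and i = ?j])
      using h1 h2 h3 h4 by blast+
  qed
  finally show ?thesis .
qed

definition wt :: "real \<Rightarrow> real \<Rightarrow> nat \<times> nat \<times> 's \<Rightarrow> real" where
  "wt t1 t2 = (\<lambda>(m1, m2, s). exp (real m1 * t1 + real m2 * t2))"

lemma sum_prod': "sum f (A \<times> B) = (\<Sum>a\<in>A. \<Sum>b\<in>B. f (a, b))"
  by (simp add: sum.cartesian_product)

lemma sum_if_const: "(\<Sum>a\<in>S. if P then f a else 0) = (if P then sum f S else (0::'b::comm_monoid_add))"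
  by (cases P) auto

lemma core:
  fixes A :: "int \<Rightarrow> int \<Rightarrow> 's::finite \<Rightarrow> 's \<Rightarrow> real"
  assumes x: "x \<in> cIdx c1 c2"
  shows "(\<Sum>y\<in>cIdx c1 c2. cAstar A c1 c2 (real c1 * t1) (real c2 * t2) x y * wt t1 t2 y
            * (if snd (snd y) = s' then 1 else 0)) = wt t1 t2 x * Astar A t1 t2 (snd (snd x)) s'"
proof -
  obtain m1 m2 s where xe: "x = (m1, m2, s)" and m1: "m1 < c1" and m2: "m2 < c2"
    using x unfolding cIdx_def by auto
  define u1 where "u1 i m1' = int c1 * i + int m1' - int m1" for i m1'
  define u2 where "u2 j m2' = int c2 * j + int m2' - int m2" for j m2'
  define G where "G k l = exp (real_of_int k * t1 + real_of_int l * t2) * A k l s s'" for k l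
  let ?C = "cAstar A c1 c2 (real c1 * t1) (real c2 * t2)"
  have P1: "?C x (m1', m2', s') * exp (real m1' * t1 + real m2' * t2)
     = wt t1 t2 x * (\<Sum>i\<in>dirs. \<Sum>j\<in>dirs. if u1 i m1' \<in> dirs then
          (if u2 j m2' \<in> dirs then G (u1 i m1') (u2 j m2') else 0) else 0)" for m1' m2'
  proof -
    have e: "exp (real_of_int i * (real c1 * t1) + real_of_int j * (real c2 * t2)) * exp (real m1' * t1 + real m2' * t2)
        = exp (real m1 * t1 + real m2 * t2) * exp (real_of_int (u1 i m1') * t1 + real_of_int (u2 j m2') * t2)" for i j
    proof -
      have "real_of_int i * (real c1 * t1) + real_of_int j * (real c2 * t2) + (real m1' * t1 + real m2' * t2)
          = real m1 * t1 + real m2 * t2 + (real_of_int (u1 i m1') * t1 + real_of_int (u2 j m2') * t2)"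
        unfolding u1_def u2_def by (simp add: algebra_simps)
      then show ?thesis by (simp add: exp_add[symmetric])
    qed
    show ?thesis
      unfolding cAstar_def cA_def xe wt_def
      apply (simp add: sum_distrib_left sum_distrib_right Let_def)
      apply (intro sum.cong refl)
      subgoal for i j
        using e[of i j] unfolding G_def u1_def u2_def by (auto simp: algebra_simps)
      done
  qed
  have L: "(\<Sum>y\<in>cIdx c1 c2. ?C x y * wt t1 t2 y * (if snd (snd y) = s' then 1 else 0))
     = (\<Sum>m1'\<in>{0..<c1}. \<Sum>m2'\<in>{0..<c2}. ?C x (m1', m2', s') * exp (real m1' * t1 + real m2' * t2))"
  proof -
    have d: "(\<Sum>b\<in>UNIV. f b * (if b = a then 1 else 0)) = (f a :: real)" for f and a :: 's
    proof -
      have "(\<Sum>b\<in>UNIV. f b * (if b = a then 1 else 0)) = (\<Sum>b\<in>UNIV. if b = a then f b else 0)"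
        by (intro sum.cong) auto
      also have "\<dots> = f a" by simp
      finally show ?thesis .
    qed
    show ?thesis unfolding cIdx_def sum_prod' wt_def using d by simp
  qed
  have inner: "(\<Sum>m2'\<in>{0..<c2}. \<Sum>j\<in>dirs. if u1 i m1' \<in> dirs then
          (if u2 j m2' \<in> dirs then G (u1 i m1') (u2 j m2') else 0) else 0)
      = (if u1 i m1' \<in> dirs then (\<Sum>l\<in>dirs. G (u1 i m1') l) else 0)" for i m1'
  proof -
    have "(\<Sum>m2'\<in>{0..<c2}. \<Sum>j\<in>dirs. if u1 i m1' \<in> dirs then
          (if u2 j m2' \<in> dirs then G (u1 i m1') (u2 j m2') else 0) else 0)
      = (if u1 i m1' \<in> dirs then (\<Sum>m2'\<in>{0..<c2}. \<Sum>j\<in>dirs.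
          (if u2 j m2' \<in> dirs then G (u1 i m1') (u2 j m2') else 0)) else 0)"
      by (simp add: sum_if_const)
    also have "\<dots> = (if u1 i m1' \<in> dirs then (\<Sum>l\<in>dirs. G (u1 i m1') l) else 0)"
      unfolding u2_def using dirs_reindex[OF m2, of "G (u1 i m1')"] by simp
    finally show ?thesis .
  qed
  have "(\<Sum>m1'\<in>{0..<c1}. \<Sum>m2'\<in>{0..<c2}. ?C x (m1', m2', s') * exp (real m1' * t1 + real m2' * t2))
     = wt t1 t2 x * (\<Sum>m1'\<in>{0..<c1}. \<Sum>m2'\<in>{0..<c2}. \<Sum>i\<in>dirs. \<Sum>j\<in>dirs. if u1 i m1' \<in> dirs then
          (if u2 j m2' \<in> dirs then G (u1 i m1') (u2 j m2') else 0) else 0)"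
    by (simp add: P1 sum_distrib_left)
  also have "\<dots> = wt t1 t2 x * (\<Sum>m1'\<in>{0..<c1}. \<Sum>i\<in>dirs. \<Sum>m2'\<in>{0..<c2}. \<Sum>j\<in>dirs. if u1 i m1' \<in> dirs then
          (if u2 j m2' \<in> dirs then G (u1 i m1') (u2 j m2') else 0) else 0)"
    by (subst (2) sum.swap) (rule refl)
  also have "\<dots> = wt t1 t2 x * (\<Sum>m1'\<in>{0..<c1}. \<Sum>i\<in>dirs.
          if u1 i m1' \<in> dirs then (\<Sum>l\<in>dirs. G (u1 i m1') l) else 0)"
    by (simp add: inner)
  also have "\<dots> = wt t1 t2 x * (\<Sum>k\<in>dirs. \<Sum>l\<in>dirs. G k l)"
    unfolding u1_def using dirs_reindex[OF m1, of "\<lambda>k. \<Sum>l\<in>dirs. G k l"] by simp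
  also have "\<dots> = wt t1 t2 x * Astar A t1 t2 (snd (snd x)) s'"
    unfolding Astar_def G_def xe by simp
  finally show ?thesis using L by simp
qed

lemma key:
  fixes A :: "int \<Rightarrow> int \<Rightarrow> 's::finite \<Rightarrow> 's \<Rightarrow> real"
  assumes x: "x \<in> cIdx c1 c2"
  shows "(\<Sum>y\<in>cIdx c1 c2. matpow (cIdx c1 c2) (cAstar A c1 c2 (real c1 * t1) (real c2 * t2)) n x y
            * wt t1 t2 y * (if snd (snd y) = s' then 1 else 0))
         = wt t1 t2 x * matpow UNIV (Astar A t1 t2) n (snd (snd x)) s'"
  using x
proof (induction n arbitrary: x s')
  case 0
  have "(\<Sum>y\<in>cIdx c1 c2. matpow (cIdx c1 c2) (cAstar A c1 c2 (real c1 * t1) (real c2 * t2)) 0 x y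
            * wt t1 t2 y * (if snd (snd y) = s' then 1 else 0))
      = (\<Sum>y\<in>cIdx c1 c2. if x = y then wt t1 t2 y * (if snd (snd y) = s' then 1 else 0) else 0)"
    by (intro sum.cong) auto
  also have "\<dots> = wt t1 t2 x * (if snd (snd x) = s' then 1 else 0)"
    using 0 by (simp add: sum.delta' cIdx_def del: sum.delta)
  finally show ?case by simp
next
  case (Suc n)
  let ?I = "cIdx c1 c2 :: (nat \<times> nat \<times> 's) set"
  let ?C = "cAstar A c1 c2 (real c1 * t1) (real c2 * t2)"
  let ?B = "Astar A t1 t2"
  let ?P = "matpow ?I ?C n"
  have fI: "finite ?I" unfolding cIdx_def by (intro finite_cartesian_product) auto
  have "(\<Sum>y\<in>?I. matpow ?I ?C (Suc n) x y * wt t1 t2 y * (if snd (snd y) = s' then 1 else 0))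
      = (\<Sum>y\<in>?I. \<Sum>k\<in>?I. ?P x k * (?C k y * wt t1 t2 y * (if snd (snd y) = s' then 1 else 0)))"
    by (simp add: sum_distrib_right mult.assoc)
  also have "\<dots> = (\<Sum>k\<in>?I. ?P x k * (\<Sum>y\<in>?I. ?C k y * wt t1 t2 y * (if snd (snd y) = s' then 1 else 0)))"
    by (subst sum.swap) (simp add: sum_distrib_left)
  also have "\<dots> = (\<Sum>k\<in>?I. ?P x k * (wt t1 t2 k * ?B (snd (snd k)) s'))"
    by (intro sum.cong refl) (simp add: core)
  finally have L: "(\<Sum>y\<in>?I. matpow ?I ?C (Suc n) x y * wt t1 t2 y * (if snd (snd y) = s' then 1 else 0))
      = (\<Sum>k\<in>?I. ?P x k * (wt t1 t2 k * ?B (snd (snd k)) s'))" .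
  have "wt t1 t2 x * matpow UNIV ?B (Suc n) (snd (snd x)) s'
     = (\<Sum>s''\<in>UNIV. (wt t1 t2 x * matpow UNIV ?B n (snd (snd x)) s'') * ?B s'' s')"
    by (simp add: sum_distrib_left mult.assoc)
  also have "\<dots> = (\<Sum>s''\<in>UNIV. (\<Sum>k\<in>?I. ?P x k * wt t1 t2 k * (if snd (snd k) = s'' then 1 else 0)) * ?B s'' s')"
    using Suc.IH[OF Suc.prems] by simp
  also have "\<dots> = (\<Sum>k\<in>?I. \<Sum>s''\<in>UNIV. ?P x k * wt t1 t2 k * ((if snd (snd k) = s'' then 1 else 0) * ?B s'' s'))"
    by (subst sum.swap) (simp add: sum_distrib_right mult.assoc)
  also have "\<dots> = (\<Sum>k\<in>?I. ?P x k * (wt t1 t2 k * ?B (snd (snd k)) s'))"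
  proof (intro sum.cong refl)
    fix k
    have "(\<Sum>s''\<in>UNIV. ?P x k * wt t1 t2 k * ((if snd (snd k) = s'' then 1 else 0) * ?B s'' s'))
        = (\<Sum>s''\<in>UNIV. if snd (snd k) = s'' then ?P x k * wt t1 t2 k * ?B s'' s' else 0)"
      by (intro sum.cong) auto
    also have "\<dots> = ?P x k * (wt t1 t2 k * ?B (snd (snd k)) s')" by simp
    finally show "(\<Sum>s''\<in>UNIV. ?P x k * wt t1 t2 k * ((if snd (snd k) = s'' then 1 else 0) * ?B s'' s'))
        = ?P x k * (wt t1 t2 k * ?B (snd (snd k)) s')" .
  qed
  finally show ?case using L by simp
qed

lemma matpow_nonneg:
  assumes "\<And>x y. M x y \<ge> 0"
  shows "matpow I M n x y \<ge> 0"
  using assms by (induction n arbitrary: y) (auto intro!: sum_nonneg mult_nonneg_nonneg)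

theorem proposition5p1:
  fixes A :: "int \<Rightarrow> int \<Rightarrow> 's::finite \<Rightarrow> 's \<Rightarrow> real"
    and \<pi> :: "'s \<Rightarrow> real"
    and c1 c2 :: nat
    and \<theta>1 \<theta>2 :: real
  assumes "blocks_ok A"
    and "irreducible_on UNIV (transP A)"
    and "aperiodic_on UNIV (transP A)"
    and "stationary A \<pi>"
    and "drift1 A \<pi> < 0 \<or> drift2 A \<pi> < 0"
    and "irreducible_on Splus (transP A)"
    and "c1 > 0" and "c2 > 0"
  shows "cp UNIV (Astar A \<theta>1 \<theta>2)
       = cp (cIdx c1 c2) (cAstar A c1 c2 (real c1 * \<theta>1) (real c2 * \<theta>2))"
proof -
  let ?I = "cIdx c1 c2 :: (nat \<times> nat \<times> 's) set"
  let ?C = "cAstar A c1 c2 (real c1 * \<theta>1) (real c2 * \<theta>2)"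
  let ?B = "Astar A \<theta>1 \<theta>2"
  have fI: "finite ?I" unfolding cIdx_def by (intro finite_cartesian_product) auto
  have Apos: "k \<in> dirs \<Longrightarrow> l \<in> dirs \<Longrightarrow> A k l s s' \<ge> 0" for k l s s'
    using assms(1) unfolding blocks_ok_def by blast
  have Bpos: "?B s s' \<ge> 0" for s s'
    unfolding Astar_def using Apos by (auto intro!: sum_nonneg)
  have Cpos: "?C x y \<ge> 0" for x y
    unfolding cAstar_def cA_def using Apos
    by (auto intro!: sum_nonneg simp: Let_def split: prod.splits)
  have wpos: "wt \<theta>1 \<theta>2 x > 0" for x :: "nat \<times> nat \<times> 's"
    unfolding wt_def by (auto split: prod.splits)
  have equiv: "(\<forall>i\<in>UNIV. \<forall>j\<in>UNIV. summable (\<lambda>n. r ^ n * matpow UNIV ?B n i j))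
      \<longleftrightarrow> (\<forall>i\<in>?I. \<forall>j\<in>?I. summable (\<lambda>n. r ^ n * matpow ?I ?C n i j))" if r: "r \<ge> 0" for r
  proof
    assume SB: "\<forall>i\<in>UNIV. \<forall>j\<in>UNIV. summable (\<lambda>n. r ^ n * matpow UNIV ?B n i j)"
    show "\<forall>i\<in>?I. \<forall>j\<in>?I. summable (\<lambda>n. r ^ n * matpow ?I ?C n i j)"
    proof (intro ballI)
      fix x y assume x: "x \<in> ?I" and y: "y \<in> ?I"
      let ?s = "snd (snd x)" and ?s' = "snd (snd y)"
      have le: "matpow ?I ?C n x y \<le> wt \<theta>1 \<theta>2 x / wt \<theta>1 \<theta>2 y * matpow UNIV ?B n ?s ?s'" for n
      proof -
        have "matpow ?I ?C n x y * wt \<theta>1 \<theta>2 y * (if snd (snd y) = ?s' then 1 else 0)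
           \<le> (\<Sum>z\<in>?I. matpow ?I ?C n x z * wt \<theta>1 \<theta>2 z * (if snd (snd z) = ?s' then 1 else 0))"
          by (rule member_le_sum[OF y _ fI])
             (auto intro!: mult_nonneg_nonneg matpow_nonneg Cpos less_imp_le[OF wpos])
        also have "\<dots> = wt \<theta>1 \<theta>2 x * matpow UNIV ?B n ?s ?s'"
          by (rule key[OF x])
        finally have "matpow ?I ?C n x y * wt \<theta>1 \<theta>2 y \<le> wt \<theta>1 \<theta>2 x * matpow UNIV ?B n ?s ?s'"
          by simp
        then show ?thesis using wpos[of y] by (simp add: field_simps)
      qed
      show "summable (\<lambda>n. r ^ n * matpow ?I ?C n x y)"
      proof (rule summable_comparison_test')
        show "summable (\<lambda>n. wt \<theta>1 \<theta>2 x / wt \<theta>1 \<theta>2 y * (r ^ n * matpow UNIV ?B n ?s ?s'))"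
          using SB by (intro summable_mult) auto
        show "norm (r ^ n * matpow ?I ?C n x y) \<le> wt \<theta>1 \<theta>2 x / wt \<theta>1 \<theta>2 y * (r ^ n * matpow UNIV ?B n ?s ?s')"
          if "n \<ge> 0" for n
        proof -
          have "norm (r ^ n * matpow ?I ?C n x y) = r ^ n * matpow ?I ?C n x y"
            using r by (simp add: matpow_nonneg[OF Cpos])
          also have "\<dots> \<le> r ^ n * (wt \<theta>1 \<theta>2 x / wt \<theta>1 \<theta>2 y * matpow UNIV ?B n ?s ?s')"
            using r le[of n] by (intro mult_left_mono) auto
          finally show ?thesis by (simp add: algebra_simps)
        qed
      qed
    qed
  next
    assume SC: "\<forall>i\<in>?I. \<forall>j\<in>?I. summable (\<lambda>n. r ^ n * matpow ?I ?C n i j)"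
    show "\<forall>i\<in>UNIV. \<forall>j\<in>UNIV. summable (\<lambda>n. r ^ n * matpow UNIV ?B n i j)"
    proof (intro ballI)
      fix s s' :: 's
      assume "s \<in> UNIV" "s' \<in> UNIV"
      let ?x = "(0, 0, s) :: nat \<times> nat \<times> 's"
      have x: "?x \<in> ?I" using assms(7,8) unfolding cIdx_def by auto
      have w0: "wt \<theta>1 \<theta>2 ?x = 1" unfolding wt_def by simp
      have eq: "r ^ n * matpow UNIV ?B n s s'
          = (\<Sum>z\<in>?I. r ^ n * matpow ?I ?C n ?x z * (wt \<theta>1 \<theta>2 z * (if snd (snd z) = s' then 1 else 0)))" for n
      proof -
        have k: "(\<Sum>z\<in>?I. matpow ?I ?C n ?x z * wt \<theta>1 \<theta>2 z * (if snd (snd z) = s' then 1 else 0))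
            = wt \<theta>1 \<theta>2 ?x * matpow UNIV ?B n (snd (snd ?x)) s'"
          by (rule key[OF x])
        show ?thesis using k w0 by (simp add: sum_distrib_left[symmetric] mult.assoc)
      qed
      show "summable (\<lambda>n. r ^ n * matpow UNIV ?B n s s')"
        unfolding eq using SC x by (intro summable_sum summable_mult2) auto
    qed
  qed
  have eqv: "(r \<ge> 0 \<and> (\<forall>i\<in>UNIV. \<forall>j\<in>UNIV. summable (\<lambda>n. r ^ n * matpow UNIV ?B n i j)))
      \<longleftrightarrow> (r \<ge> 0 \<and> (\<forall>i\<in>?I. \<forall>j\<in>?I. summable (\<lambda>n. r ^ n * matpow ?I ?C n i j)))" for r
    using equiv[of r] by (rule conj_cong[OF refl])
  show ?thesis
    unfolding cp_def by (simp only: eqv)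
qed
end
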